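(* Let $\kappa>0$, let $x_1=x_1(\kappa)$ be a real differentiable function of $\kappa$, let $a\neq0$, $b$ be real constants, and set $$\Theta=\kappa(x+x_1+4\kappa^2t),\qquad \gamma=x+x_1+\kappa\,\frac{d x_1}{d\kappa}+(12\kappa^2+2a)t+2b .$$ Then, on the set where $2\kappa\gamma-\sin2\Theta\neq0$, the functions $$u=2\partial_x^2\ln(2\kappa\gamma-\sin2\Theta)=\frac{32\kappa^2\sin\Theta(\kappa\gamma\cos\Theta-\sin\Theta)}{(2\kappa\gamma-\sin2\Theta)^2},\qquad \varphi_1=\frac{4\kappa\sqrt a\,\sin\Theta}{2\kappa\gamma-\sin2\Theta}$$ solve the KdV equation with one self-consistent source $$u_t+6uu_x+u_{xxx}+4\varphi_1\varphi_{1,x}=0,\qquad \varphi_{1,xx}+(\kappa^2+u)\varphi_1=0$$ (here $\lambda_1=\kappa^2$ and $\sqrt a$ is any fixed square root of $a$).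
   Context: This is the solution obtained from the generalized binary Darboux transformation applied to $u=0$ with $f=\sin\Theta$ (a solution of $f_{xx}+\kappa^2f=0$, $f_t=4\kappa^2 f_x$) and $e(t)=at+b$. *)

theory Defs
  imports "HOL-Analysis.Analysis"
begin

definition Theta :: "real \<Rightarrow> (real \<Rightarrow> real) \<Rightarrow> real \<Rightarrow> real \<Rightarrow> real" where
  "Theta k x1 x t = k * (x + x1 k + 4 * k^2 * t)"

definition gam :: "real \<Rightarrow> (real \<Rightarrow> real) \<Rightarrow> real \<Rightarrow> real \<Rightarrow> real \<Rightarrow> real \<Rightarrow> real" where
  "gam k x1 a b x t = x + x1 k + k * deriv x1 k + (12 * k^2 + 2 * a) * t + 2 * b"

definition Den :: "real \<Rightarrow> (real \<Rightarrow> real) \<Rightarrow> real \<Rightarrow> real \<Rightarrow> real \<Rightarrow> real \<Rightarrow> real" where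
  "Den k x1 a b x t = 2 * k * gam k x1 a b x t - sin (2 * Theta k x1 x t)"

definition kdv_u :: "real \<Rightarrow> (real \<Rightarrow> real) \<Rightarrow> real \<Rightarrow> real \<Rightarrow> real \<Rightarrow> real \<Rightarrow> real" where
  "kdv_u k x1 a b x t =
     32 * k^2 * sin (Theta k x1 x t) *
       (k * gam k x1 a b x t * cos (Theta k x1 x t) - sin (Theta k x1 x t))
     / (Den k x1 a b x t)^2"

text \<open>phi_1, with sa a fixed (complex) square root of a.\<close>
definition kdv_phi :: "real \<Rightarrow> (real \<Rightarrow> real) \<Rightarrow> real \<Rightarrow> real \<Rightarrow> complex \<Rightarrow> real \<Rightarrow> real \<Rightarrow> complex" where
  "kdv_phi k x1 a b sa x t =
     of_real (4 * k) * sa * of_real (sin (Theta k x1 x t)) / of_real (Den k x1 a b x t)"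

end

theory Submission
  imports Defs
begin
definition Dd :: "real \<Rightarrow> real \<Rightarrow> real \<Rightarrow> real \<Rightarrow> real" where
  "Dd k g s c = 2 * k * g - 2 * s * c"
definition pN0 :: "real \<Rightarrow> real \<Rightarrow> real \<Rightarrow> real \<Rightarrow> real \<Rightarrow> real" where
  "pN0 k a g s c = (-32) * k^2 * s^2 + (32) * k^3 * g * s * c"

definition pN1 :: "real \<Rightarrow> real \<Rightarrow> real \<Rightarrow> real \<Rightarrow> real \<Rightarrow> real" where
  "pN1 k a g s c = (128) * k^3 * s^2 + (-64) * k^3 * s^2 * c^2 + (128) * k^3 * s^4 + (-192) * k^4 * g * s * c + (64) * k^4 * g * s * c^3 + (-64) * k^4 * g * s^3 * c + (64) * k^5 * g^2 * c^2 + (-64) * k^5 * g^2 * s^2"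

definition pN2 :: "real \<Rightarrow> real \<Rightarrow> real \<Rightarrow> real \<Rightarrow> real \<Rightarrow> real" where
  "pN2 k a g s c = (-768) * k^4 * s^2 + (1024) * k^4 * s^2 * c^2 + (-256) * k^4 * s^2 * c^4 + (-1536) * k^4 * s^4 + (-768) * k^4 * s^6 + (1280) * k^5 * g * s * c + (-1536) * k^5 * g * s * c^3 + (256) * k^5 * g * s * c^5 + (2560) * k^5 * g * s^3 * c + (256) * k^5 * g * s^5 * c + (-512) * k^6 * g^2 * c^2 + (512) * k^6 * g^2 * c^4 + (512) * k^6 * g^2 * s^2 + (-1024) * k^6 * g^2 * s^2 * c^2 + (512) * k^6 * g^2 * s^4 + (-512) * k^7 * g^3 * s * c"

definition pN3 :: "real \<Rightarrow> real \<Rightarrow> real \<Rightarrow> real \<Rightarrow> real \<Rightarrow> real" where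
  "pN3 k a g s c = (6144) * k^5 * s^2 + (-13824) * k^5 * s^2 * c^2 + (9216) * k^5 * s^2 * c^4 + (-1536) * k^5 * s^2 * c^6 + (18432) * k^5 * s^4 + (-9216) * k^5 * s^4 * c^2 + (18432) * k^5 * s^6 + (2560) * k^5 * s^6 * c^2 + (6144) * k^5 * s^8 + (-10752) * k^6 * g * s * c + (23040) * k^6 * g * s * c^3 + (-13824) * k^6 * g * s * c^5 + (1536) * k^6 * g * s * c^7 + (-41472) * k^6 * g * s^3 * c + (14336) * k^6 * g * s^3 * c^3 + (512) * k^6 * g * s^3 * c^5 + (-28160) * k^6 * g * s^5 * c + (-512) * k^6 * g * s^5 * c^3 + (-1536) * k^6 * g * s^7 * c + (4608) * k^7 * g^2 * c^2 + (-9216) * k^7 * g^2 * c^4 + (4608) * k^7 * g^2 * c^6 + (-4608) * k^7 * g^2 * s^2 + (35840) * k^7 * g^2 * s^2 * c^2 + (-6656) * k^7 * g^2 * s^2 * c^4 + (-11264) * k^7 * g^2 * s^4 + (6656) * k^7 * g^2 * s^4 * c^2 + (-4608) * k^7 * g^2 * s^6 + (5120) * k^8 * g^3 * s * c + (-11264) * k^8 * g^3 * s * c^3 + (11264) * k^8 * g^3 * s^3 * c + (-1024) * k^9 * g^4 * c^2 + (1024) * k^9 * g^4 * s^2"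

definition pNt :: "real \<Rightarrow> real \<Rightarrow> real \<Rightarrow> real \<Rightarrow> real \<Rightarrow> real" where
  "pNt k a g s c = (256) * k^3 * a * s^2 + (-128) * k^3 * a * s^2 * c^2 + (-128) * k^4 * a * g * s * c + (1536) * k^5 * s^2 + (-768) * k^5 * s^2 * c^2 + (512) * k^5 * s^4 + (-1280) * k^6 * g * s * c + (256) * k^6 * g * s * c^3 + (-256) * k^6 * g * s^3 * c + (256) * k^7 * g^2 * c^2 + (-256) * k^7 * g^2 * s^2"

definition pF0 :: "real \<Rightarrow> real \<Rightarrow> real \<Rightarrow> real \<Rightarrow> real \<Rightarrow> real" where
  "pF0 k a g s c = (4) * k * s"

definition pF1 :: "real \<Rightarrow> real \<Rightarrow> real \<Rightarrow> real \<Rightarrow> real \<Rightarrow> real" where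
  "pF1 k a g s c = (-8) * k^2 * s + (-8) * k^2 * s^3 + (8) * k^3 * g * c"

definition pF2 :: "real \<Rightarrow> real \<Rightarrow> real \<Rightarrow> real \<Rightarrow> real \<Rightarrow> real" where
  "pF2 k a g s c = (32) * k^3 * s + (-32) * k^3 * s * c^2 + (64) * k^3 * s^3 + (16) * k^3 * s^3 * c^2 + (32) * k^3 * s^5 + (-32) * k^4 * g * c + (32) * k^4 * g * c^3 + (-64) * k^4 * g * s^2 * c + (-16) * k^5 * g^2 * s"

definition dDx :: "real \<Rightarrow> real \<Rightarrow> real \<Rightarrow> real \<Rightarrow> real \<Rightarrow> real" where
  "dDx k a g s c = (2) * k + (-2) * k * c^2 + (2) * k * s^2"

definition pL2 :: "real \<Rightarrow> real \<Rightarrow> real \<Rightarrow> real \<Rightarrow> real \<Rightarrow> real" where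
  "pL2 k a g s c = (-4) * k^2 + (8) * k^2 * c^2 + (-4) * k^2 * c^4 + (-8) * k^2 * s^2 + (-8) * k^2 * s^2 * c^2 + (-4) * k^2 * s^4 + (16) * k^3 * g * s * c"

definition qN0 :: "real \<Rightarrow> real \<Rightarrow> real \<Rightarrow> real \<Rightarrow> real \<Rightarrow> real" where
  "qN0 k a g s c = (-32) * k^3 * s * c + (32) * k^4 * g * c^2 + (-32) * k^4 * g * s^2"

definition qN1 :: "real \<Rightarrow> real \<Rightarrow> real \<Rightarrow> real \<Rightarrow> real \<Rightarrow> real" where
  "qN1 k a g s c = (64) * k^4 * s * c + (-64) * k^4 * s * c^3 + (576) * k^4 * s^3 * c + (-64) * k^5 * g * c^2 + (64) * k^5 * g * c^4 + (64) * k^5 * g * s^2 + (-384) * k^5 * g * s^2 * c^2 + (64) * k^5 * g * s^4 + (-256) * k^6 * g^2 * s * c"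

definition qN2 :: "real \<Rightarrow> real \<Rightarrow> real \<Rightarrow> real \<Rightarrow> real \<Rightarrow> real" where
  "qN2 k a g s c = (-256) * k^5 * s * c + (512) * k^5 * s * c^3 + (-256) * k^5 * s * c^5 + (-5632) * k^5 * s^3 * c + (1024) * k^5 * s^3 * c^3 + (-4352) * k^5 * s^5 * c + (256) * k^6 * g * c^2 + (-512) * k^6 * g * c^4 + (256) * k^6 * g * c^6 + (-256) * k^6 * g * s^2 + (10240) * k^6 * g * s^2 * c^2 + (-1280) * k^6 * g * s^2 * c^4 + (-1536) * k^6 * g * s^4 + (1280) * k^6 * g * s^4 * c^2 + (-256) * k^6 * g * s^6 + (512) * k^7 * g^2 * s * c + (-4096) * k^7 * g^2 * s * c^3 + (4096) * k^7 * g^2 * s^3 * c + (-512) * k^8 * g^3 * c^2 + (512) * k^8 * g^3 * s^2"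

definition qF0 :: "real \<Rightarrow> real \<Rightarrow> real \<Rightarrow> real \<Rightarrow> real \<Rightarrow> real" where
  "qF0 k a g s c = (4) * k^2 * c"

definition qF1 :: "real \<Rightarrow> real \<Rightarrow> real \<Rightarrow> real \<Rightarrow> real \<Rightarrow> real" where
  "qF1 k a g s c = (-24) * k^3 * s^2 * c + (-8) * k^4 * g * s"

definition qdD :: "real \<Rightarrow> real \<Rightarrow> real \<Rightarrow> real \<Rightarrow> real \<Rightarrow> real" where
  "qdD k a g s c = (8) * k^2 * s * c"

definition qNt :: "real \<Rightarrow> real \<Rightarrow> real \<Rightarrow> real \<Rightarrow> real \<Rightarrow> real" where
  "qNt k a g s c = (64) * k^3 * a * s * c + (128) * k^5 * s * c + (128) * k^6 * g * c^2 + (-128) * k^6 * g * s^2"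

definition QE :: "real \<Rightarrow> real \<Rightarrow> real \<Rightarrow> real \<Rightarrow> real \<Rightarrow> real" where
  "QE k a g s c = (-512) * k^3 * a * s^4 * c^2 + (1024) * k^4 * a * g * s^3 * c + (-6144) * k^5 * s^2 + (7680) * k^5 * s^2 * c^2 + (-1536) * k^5 * s^2 * c^4 + (-1536) * k^5 * s^4 * c^2 + (6144) * k^5 * s^6 + (-512) * k^5 * a * g^2 * s^2 + (10752) * k^6 * g * s * c + (-12288) * k^6 * g * s * c^3 + (1536) * k^6 * g * s * c^5 + (3072) * k^6 * g * s^3 * c + (-1536) * k^6 * g * s^5 * c + (-4608) * k^7 * g^2 * c^2 + (4608) * k^7 * g^2 * c^4 + (-1536) * k^7 * g^2 * s^2 + (-4608) * k^7 * g^2 * s^4"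

definition QS :: "real \<Rightarrow> real \<Rightarrow> real \<Rightarrow> real \<Rightarrow> real \<Rightarrow> real" where
  "QS k a g s c = (-32) * k^3 * s + (32) * k^3 * s^3 + (32) * k^4 * g * c"

definition QL :: "real \<Rightarrow> real \<Rightarrow> real \<Rightarrow> real \<Rightarrow> real \<Rightarrow> real" where
  "QL k a g s c = (8) * k^2 + (-8) * k^2 * c^2 + (-8) * k^2 * s^2"

definition dDt :: "real \<Rightarrow> real \<Rightarrow> real \<Rightarrow> real \<Rightarrow> real \<Rightarrow> real" where
  "dDt k a g s c = (4) * k * a + (24) * k^3 + (-8) * k^3 * c^2 + (8) * k^3 * s^2"
definition Rx :: "(real \<Rightarrow> real \<Rightarrow> real \<Rightarrow> real \<Rightarrow> real \<Rightarrow> real) \<Rightarrow> nat \<Rightarrow> real \<Rightarrow> real \<Rightarrow> real \<Rightarrow> real \<Rightarrow> real \<Rightarrow> real" where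
  "Rx N n k a be nu y = N k a (y+nu) (sin(k * y+be)) (cos(k * y+be)) / Dd k (y+nu) (sin(k * y+be)) (cos(k * y+be)) ^ n"

lemma dDd: "((\<lambda>y. Dd k (y+nu) (sin(k * y+be)) (cos(k * y+be))) has_real_derivative dDx k a (y+nu) (sin(k * y+be)) (cos(k * y+be))) (at y)"
  unfolding Dd_def dDx_def
  apply (rule derivative_eq_intros refl)+
  apply (simp?)
  apply algebra
  done

lemma quot_aux:
  fixes M N D dD :: real
  assumes "D \<noteq> 0"
  shows "(M * D ^ n - N * (of_nat n * (dD * D ^ (n - Suc 0)))) / (D ^ n * D ^ n) = (M * D - real n * N * dD) / D ^ Suc n"
proof (cases n)
  case 0
  then show ?thesis using assms by (simp add: field_simps)
next
  case (Suc m)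
  have "(M * D ^ n - N * (of_nat n * (dD * D ^ (n - Suc 0)))) = D ^ m * (M * D - real n * N * dD)"
    using Suc by (simp add: algebra_simps)
  moreover have "D ^ n * D ^ n = D ^ m * D ^ Suc n" using Suc by (simp add: algebra_simps)
  ultimately show ?thesis using assms by simp
qed

lemma Rx_deriv:
  assumes "((\<lambda>y. N k a (y+nu) (sin(k * y+be)) (cos(k * y+be))) has_real_derivative M k a (y+nu) (sin(k * y+be)) (cos(k * y+be))) (at y)"
    and "Dd k (y+nu) (sin(k * y+be)) (cos(k * y+be)) \<noteq> 0"
    and "\<And>g s c. N' k a g s c = M k a g s c * Dd k g s c - real n * N k a g s c * dDx k a g s c"
  shows "(Rx N n k a be nu has_real_derivative Rx N' (Suc n) k a be nu y) (at y)"
proof -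
  let ?D = "\<lambda>y. Dd k (y+nu) (sin(k * y+be)) (cos(k * y+be))"
  let ?N = "\<lambda>y. N k a (y+nu) (sin(k * y+be)) (cos(k * y+be))"
  have h: "DERIV (\<lambda>y. ?N y / ?D y ^ n) y :> (M k a (y+nu) (sin(k * y+be)) (cos(k * y+be)) * ?D y ^ n - ?N y * (of_nat n * (dDx k a (y+nu) (sin(k * y+be)) (cos(k * y+be)) * ?D y ^ (n - Suc 0)))) / (?D y ^ n * ?D y ^ n)"
    by (rule DERIV_divide[OF assms(1) DERIV_power[OF dDd[where a=a]]]) (use assms(2) in simp)
  from DERIV_cong[OF h quot_aux[OF assms(2)]] show ?thesis unfolding Rx_def assms(3) .
qed

lemma d_pN0: "((\<lambda>y. pN0 k a (y+nu) (sin(k * y+be)) (cos(k * y+be))) has_real_derivative qN0 k a (y+nu) (sin(k * y+be)) (cos(k * y+be))) (at y)"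
  unfolding pN0_def qN0_def
  apply (rule derivative_eq_intros refl)+
  apply (simp?)
  apply algebra
  done

lemma d_pN1: "((\<lambda>y. pN1 k a (y+nu) (sin(k * y+be)) (cos(k * y+be))) has_real_derivative qN1 k a (y+nu) (sin(k * y+be)) (cos(k * y+be))) (at y)"
  unfolding pN1_def qN1_def
  apply (rule derivative_eq_intros refl)+
  apply (simp?)
  apply algebra
  done

lemma d_pN2: "((\<lambda>y. pN2 k a (y+nu) (sin(k * y+be)) (cos(k * y+be))) has_real_derivative qN2 k a (y+nu) (sin(k * y+be)) (cos(k * y+be))) (at y)"
  unfolding pN2_def qN2_def
  apply (rule derivative_eq_intros refl)+
  apply (simp?)
  apply algebra
  done

lemma d_pF0: "((\<lambda>y. pF0 k a (y+nu) (sin(k * y+be)) (cos(k * y+be))) has_real_derivative qF0 k a (y+nu) (sin(k * y+be)) (cos(k * y+be))) (at y)"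
  unfolding pF0_def qF0_def
  apply (rule derivative_eq_intros refl)+
  apply (simp?)
  apply algebra
  done

lemma d_pF1: "((\<lambda>y. pF1 k a (y+nu) (sin(k * y+be)) (cos(k * y+be))) has_real_derivative qF1 k a (y+nu) (sin(k * y+be)) (cos(k * y+be))) (at y)"
  unfolding pF1_def qF1_def
  apply (rule derivative_eq_intros refl)+
  apply (simp?)
  apply algebra
  done

lemma d_dDx: "((\<lambda>y. dDx k a (y+nu) (sin(k * y+be)) (cos(k * y+be))) has_real_derivative qdD k a (y+nu) (sin(k * y+be)) (cos(k * y+be))) (at y)"
  unfolding dDx_def qdD_def
  apply (rule derivative_eq_intros refl)+
  apply (simp?)
  apply algebra
  done

lemma dt_pN0: "((\<lambda>y. pN0 k a ((12 * k^2 + 2 * a) * y+nu) (sin(4 * k^3 * y+be)) (cos(4 * k^3 * y+be))) has_real_derivative qNt k a ((12 * k^2 + 2 * a) * y+nu) (sin(4 * k^3 * y+be)) (cos(4 * k^3 * y+be))) (at y)"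
  unfolding pN0_def qNt_def
  apply (rule derivative_eq_intros refl)+
  apply (simp?)
  apply algebra
  done
lemma dt_Dd: "((\<lambda>y. Dd k ((12 * k^2 + 2 * a) * y+nu) (sin(4 * k^3 * y+be)) (cos(4 * k^3 * y+be))) has_real_derivative dDt k a ((12 * k^2 + 2 * a) * y+nu) (sin(4 * k^3 * y+be)) (cos(4 * k^3 * y+be))) (at y)"
  unfolding Dd_def dDt_def
  apply (rule derivative_eq_intros refl)+
  apply (simp?)
  apply algebra
  done

lemma id_pN1: "\<And>g s c. pN1 k a g s c = qN0 k a g s c * Dd k g s c - real 2 * pN0 k a g s c * dDx k a g s c"
  unfolding pN1_def qN0_def pN0_def Dd_def dDx_def of_nat_numeral of_nat_1 by algebra

lemma id_pN2: "\<And>g s c. pN2 k a g s c = qN1 k a g s c * Dd k g s c - real 3 * pN1 k a g s c * dDx k a g s c"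
  unfolding pN2_def qN1_def pN1_def Dd_def dDx_def of_nat_numeral of_nat_1 by algebra

lemma id_pN3: "\<And>g s c. pN3 k a g s c = qN2 k a g s c * Dd k g s c - real 4 * pN2 k a g s c * dDx k a g s c"
  unfolding pN3_def qN2_def pN2_def Dd_def dDx_def of_nat_numeral of_nat_1 by algebra

lemma id_pF1: "\<And>g s c. pF1 k a g s c = qF0 k a g s c * Dd k g s c - real 1 * pF0 k a g s c * dDx k a g s c"
  unfolding pF1_def qF0_def pF0_def Dd_def dDx_def of_nat_numeral of_nat_1 by algebra

lemma id_pF2: "\<And>g s c. pF2 k a g s c = qF1 k a g s c * Dd k g s c - real 2 * pF1 k a g s c * dDx k a g s c"
  unfolding pF2_def qF1_def pF1_def Dd_def dDx_def of_nat_numeral of_nat_1 by algebra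

lemma id_pL2: "\<And>g s c. pL2 k a g s c = qdD k a g s c * Dd k g s c - real 1 * dDx k a g s c * dDx k a g s c"
  unfolding pL2_def qdD_def Dd_def dDx_def of_nat_numeral of_nat_1 by algebra

lemma id_pNt: "pNt k a g s c = qNt k a g s c * Dd k g s c - 2 * pN0 k a g s c * dDt k a g s c"
  unfolding pNt_def qNt_def pN0_def Dd_def dDt_def by algebra

lemma id_E: "pNt k a g s c * (Dd k g s c)^2 + 6 * pN0 k a g s c * pN1 k a g s c + pN3 k a g s c + 4 * a * pF0 k a g s c * pF1 k a g s c * (Dd k g s c)^2 = (s^2 + c^2 - 1) * QE k a g s c"
  unfolding pNt_def pN0_def pN1_def pN3_def pF0_def pF1_def Dd_def QE_def by algebra

lemma id_S: "pF2 k a g s c + k^2 * pF0 k a g s c * (Dd k g s c)^2 + pN0 k a g s c * pF0 k a g s c = (s^2 + c^2 - 1) * QS k a g s c"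
  unfolding pF2_def pF0_def pN0_def Dd_def QS_def by algebra

lemma id_L: "2 * pL2 k a g s c - pN0 k a g s c = (s^2 + c^2 - 1) * QL k a g s c"
  unfolding pL2_def pN0_def QL_def by algebra

lemma deriv_loc:
  fixes f g :: "real \<Rightarrow> real"
  assumes "open S" "y \<in> S" "\<And>z. z \<in> S \<Longrightarrow> (f has_real_derivative g z) (at z)"
    and "(g has_real_derivative h) (at y)"
  shows "(deriv f has_real_derivative h) (at y)"
  by (rule has_field_derivative_transform_within_open[OF assms(4) assms(1,2)])
     (use assms(3) DERIV_imp_deriv in metis)

lemma ln_abs_deriv:
  fixes f :: "real \<Rightarrow> real"
  assumes "(f has_real_derivative f') (at y)" "f y \<noteq> 0"
  shows "((\<lambda>z. ln \<bar>f z\<bar>) has_real_derivative f' / f y) (at y)"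
proof -
  have e: "\<And>z. ln \<bar>f z\<bar> = ln ((f z)^2) / 2"
  proof -
    fix z
    show "ln \<bar>f z\<bar> = ln ((f z)^2) / 2"
    proof (cases "f z = 0")
      case True then show ?thesis by simp
    next
      case False
      have "ln (\<bar>f z\<bar> ^ 2) = real 2 * ln \<bar>f z\<bar>" using False by (simp only: ln_realpow zero_less_abs_iff)
      then show ?thesis by simp
    qed
  qed
  have "((\<lambda>z. ln ((f z)^2) / 2) has_real_derivative (inverse ((f y)^2) * (of_nat 2 * (f' * f y ^ (2 - Suc 0)))) / 2) (at y)"
  proof -
    have h1: "((\<lambda>z. (f z)^2) has_real_derivative of_nat 2 * (f' * f y ^ (2 - Suc 0))) (at y)"
      by (rule DERIV_power[OF assms(1)])
    have h2: "((\<lambda>z. ln ((f z)^2)) has_real_derivative inverse ((f y)^2) * (of_nat 2 * (f' * f y ^ (2 - Suc 0)))) (at y)"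
      by (rule DERIV_chain2[OF DERIV_ln h1]) (use assms(2) in simp)
    show ?thesis by (rule DERIV_cdivide[OF h2])
  qed
  moreover have "(inverse ((f y)^2) * (of_nat 2 * (f' * f y ^ (2 - Suc 0)))) / 2 = f' / f y"
    using assms(2) by (simp add: field_simps power2_eq_square)
  ultimately show ?thesis unfolding e by simp
qed

lemma vd_sa:
  fixes sa :: complex
  assumes "(f has_real_derivative f') (at y)"
  shows "((\<lambda>y. sa * complex_of_real (f y)) has_vector_derivative sa * complex_of_real f') (at y)"
  by (rule has_vector_derivative_mult_right[OF has_vector_derivative_of_real[OF assms]])

lemma rdiff: "(f has_real_derivative f') (at y) \<Longrightarrow> f differentiable (at y)"
  unfolding real_differentiable_def by blast

theorem mainTheorem3:
  fixes k a b :: real and x1 :: "real \<Rightarrow> real" and sa :: complex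
  assumes "k > 0"
    and "x1 differentiable (at k)"
    and "a \<noteq> 0"
    and "sa ^ 2 = complex_of_real a"
  defines "U \<equiv> kdv_u k x1 a b" and "P \<equiv> kdv_phi k x1 a b sa"
  shows "\<forall>x t. Den k x1 a b x t \<noteq> 0 \<longrightarrow>
     U x t = 2 * deriv (\<lambda>y. deriv (\<lambda>z. ln \<bar>Den k x1 a b z t\<bar>) y) x
   \<and> (\<lambda>s. U x s) differentiable (at t)
   \<and> (\<lambda>y. U y t) differentiable (at x)
   \<and> (\<lambda>y. deriv (\<lambda>z. U z t) y) differentiable (at x)
   \<and> (\<lambda>y. deriv (\<lambda>z. deriv (\<lambda>w. U w t) z) y) differentiable (at x)
   \<and> (\<lambda>y. P y t) differentiable (at x)
   \<and> (\<lambda>y. vector_derivative (\<lambda>z. P z t) (at y)) differentiable (at x)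
   \<and> complex_of_real
        (deriv (\<lambda>s. U x s) t + 6 * U x t * deriv (\<lambda>y. U y t) x
         + deriv (\<lambda>y. deriv (\<lambda>z. deriv (\<lambda>w. U w t) z) y) x)
      + 4 * P x t * vector_derivative (\<lambda>y. P y t) (at x) = 0
   \<and> vector_derivative (\<lambda>y. vector_derivative (\<lambda>z. P z t) (at y)) (at x)
      + complex_of_real (k^2 + U x t) * P x t = 0"
proof (intro allI impI)
  fix x t
  assume nz0: "Den k x1 a b x t \<noteq> 0"
  define be where "be = k * (x1 k + 4 * k^2 * t)"
  define nu where "nu = x1 k + k * deriv x1 k + (12 * k^2 + 2 * a) * t + 2 * b"
  define bt where "bt = k * (x + x1 k)"
  define nt where "nt = x + x1 k + k * deriv x1 k + 2 * b"
  have ThX: "\<And>y. Theta k x1 y t = k * y + be" unfolding Theta_def be_def by (simp add: algebra_simps)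
  have GX: "\<And>y. gam k x1 a b y t = y + nu" unfolding gam_def nu_def by (simp add: algebra_simps)
  have ThT: "\<And>s. Theta k x1 x s = 4 * k^3 * s + bt" unfolding Theta_def bt_def by (simp add: algebra_simps power3_eq_cube power2_eq_square)
  have GT: "\<And>s. gam k x1 a b x s = (12 * k^2 + 2 * a) * s + nt" unfolding gam_def nt_def by (simp add: algebra_simps)
  have DenX: "\<And>y. Den k x1 a b y t = Dd k (y+nu) (sin(k * y+be)) (cos(k * y+be))"
    unfolding Den_def ThX GX Dd_def sin_double by simp
  have DenT: "\<And>s. Den k x1 a b x s = Dd k ((12 * k^2 + 2 * a) * s + nt) (sin(4 * k^3 * s + bt)) (cos(4 * k^3 * s + bt))"
    unfolding Den_def ThT GT Dd_def sin_double by simp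
  have num: "\<And>th g. 32 * k^2 * sin th * (k * g * cos th - sin th) = pN0 k a g (sin th) (cos th)"
    unfolding pN0_def by algebra
  have UX: "\<And>y. U y t = Rx pN0 2 k a be nu y"
    unfolding U_def kdv_u_def ThX GX DenX Rx_def num ..
  have UU: "(\<lambda>y. U y t) = Rx pN0 2 k a be nu" using UX by auto
  have UT: "\<And>s. U x s = pN0 k a ((12 * k^2 + 2 * a) * s + nt) (sin(4 * k^3 * s + bt)) (cos(4 * k^3 * s + bt)) / Dd k ((12 * k^2 + 2 * a) * s + nt) (sin(4 * k^3 * s + bt)) (cos(4 * k^3 * s + bt)) ^ 2"
    unfolding U_def kdv_u_def ThT GT DenT num ..
  have UTT: "(\<lambda>s. U x s) = (\<lambda>s. pN0 k a ((12 * k^2 + 2 * a) * s + nt) (sin(4 * k^3 * s + bt)) (cos(4 * k^3 * s + bt)) / Dd k ((12 * k^2 + 2 * a) * s + nt) (sin(4 * k^3 * s + bt)) (cos(4 * k^3 * s + bt)) ^ 2)"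
    using UT by auto
  have PX: "\<And>y. P y t = sa * complex_of_real (Rx pF0 1 k a be nu y)"
    unfolding P_def kdv_phi_def ThX DenX Rx_def pF0_def by simp
  have PP: "(\<lambda>y. P y t) = (\<lambda>y. sa * complex_of_real (Rx pF0 1 k a be nu y))" using PX by auto
  define S where "S = {y. Dd k (y+nu) (sin(k * y+be)) (cos(k * y+be)) \<noteq> 0}"
  have openS: "open S" unfolding S_def Dd_def
    by (rule open_Collect_neq) (intro continuous_intros)+
  have xS: "x \<in> S" using nz0 DenX S_def by simp
  have tx1: "(12 * k^2 + 2 * a) * t + nt = x + nu" unfolding nt_def nu_def by (simp add: algebra_simps)
  have tx2: "4 * k^3 * t + bt = k * x + be" unfolding bt_def be_def by (simp add: algebra_simps power3_eq_cube power2_eq_square)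

  have R0: "\<And>y. y \<in> S \<Longrightarrow> (Rx pN0 2 k a be nu has_real_derivative Rx pN1 3 k a be nu y) (at y)"
    using Rx_deriv[where N=pN0 and M=qN0 and n=2 and N'=pN1, OF d_pN0 _ id_pN1] unfolding S_def by simp
  have R1: "\<And>y. y \<in> S \<Longrightarrow> (Rx pN1 3 k a be nu has_real_derivative Rx pN2 4 k a be nu y) (at y)"
    using Rx_deriv[where N=pN1 and M=qN1 and n=3 and N'=pN2, OF d_pN1 _ id_pN2] unfolding S_def by simp
  have R2: "\<And>y. y \<in> S \<Longrightarrow> (Rx pN2 4 k a be nu has_real_derivative Rx pN3 5 k a be nu y) (at y)"
    using Rx_deriv[where N=pN2 and M=qN2 and n=4 and N'=pN3, OF d_pN2 _ id_pN3] unfolding S_def by simp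
  have RF0: "\<And>y. y \<in> S \<Longrightarrow> (Rx pF0 1 k a be nu has_real_derivative Rx pF1 2 k a be nu y) (at y)"
    using Rx_deriv[where N=pF0 and M=qF0 and n=1 and N'=pF1, OF d_pF0 _ id_pF1] unfolding S_def by (simp add: numeral_2_eq_2)
  have RF1: "\<And>y. y \<in> S \<Longrightarrow> (Rx pF1 2 k a be nu has_real_derivative Rx pF2 3 k a be nu y) (at y)"
    using Rx_deriv[where N=pF1 and M=qF1 and n=2 and N'=pF2, OF d_pF1 _ id_pF2] unfolding S_def by simp
  have RL: "\<And>y. y \<in> S \<Longrightarrow> (Rx dDx 1 k a be nu has_real_derivative Rx pL2 2 k a be nu y) (at y)"
    using Rx_deriv[where N=dDx and M=qdD and n=1 and N'=pL2, OF d_dDx _ id_pL2] unfolding S_def by (simp add: numeral_2_eq_2)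

  have D2: "\<And>y. y \<in> S \<Longrightarrow> (deriv (Rx pN0 2 k a be nu) has_real_derivative Rx pN2 4 k a be nu y) (at y)"
    by (rule deriv_loc[OF openS _ R0 R1])
  have D3: "(deriv (deriv (Rx pN0 2 k a be nu)) has_real_derivative Rx pN3 5 k a be nu x) (at x)"
    by (rule deriv_loc[OF openS xS D2 R2[OF xS]])
  have U1: "deriv (Rx pN0 2 k a be nu) x = Rx pN1 3 k a be nu x"
    by (rule DERIV_imp_deriv[OF R0[OF xS]])
  have U3: "deriv (deriv (deriv (Rx pN0 2 k a be nu))) x = Rx pN3 5 k a be nu x"
    by (rule DERIV_imp_deriv[OF D3])

  have LnX: "(\<lambda>z. ln \<bar>Den k x1 a b z t\<bar>) = (\<lambda>z. ln \<bar>Dd k (z+nu) (sin(k * z+be)) (cos(k * z+be))\<bar>)"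
    using DenX by auto
  have L1: "\<And>y. y \<in> S \<Longrightarrow> ((\<lambda>z. ln \<bar>Dd k (z+nu) (sin(k * z+be)) (cos(k * z+be))\<bar>) has_real_derivative Rx dDx 1 k a be nu y) (at y)"
    using ln_abs_deriv[OF dDd[where a=a]] unfolding S_def Rx_def by simp
  have L2: "(deriv (\<lambda>z. ln \<bar>Dd k (z+nu) (sin(k * z+be)) (cos(k * z+be))\<bar>) has_real_derivative Rx pL2 2 k a be nu x) (at x)"
    by (rule deriv_loc[OF openS xS L1 RL[OF xS]])

  have TD: "((\<lambda>s. U x s) has_real_derivative Rx pNt 3 k a be nu x) (at t)"
  proof -
    let ?D = "\<lambda>s. Dd k ((12 * k^2 + 2 * a) * s + nt) (sin(4 * k^3 * s + bt)) (cos(4 * k^3 * s + bt))"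
    let ?N = "\<lambda>s. pN0 k a ((12 * k^2 + 2 * a) * s + nt) (sin(4 * k^3 * s + bt)) (cos(4 * k^3 * s + bt))"
    have Dnz: "?D t \<noteq> 0" using xS unfolding S_def tx1 tx2 by simp
    have h: "DERIV (\<lambda>s. ?N s / ?D s ^ 2) t :> (qNt k a ((12 * k^2 + 2 * a) * t + nt) (sin(4 * k^3 * t + bt)) (cos(4 * k^3 * t + bt)) * ?D t ^ 2 - ?N t * (of_nat 2 * (dDt k a ((12 * k^2 + 2 * a) * t + nt) (sin(4 * k^3 * t + bt)) (cos(4 * k^3 * t + bt)) * ?D t ^ (2 - Suc 0)))) / (?D t ^ 2 * ?D t ^ 2)"
      by (rule DERIV_divide[OF dt_pN0 DERIV_power[OF dt_Dd]]) (use Dnz in simp)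
    from DERIV_cong[OF h quot_aux[OF Dnz]] show ?thesis
      unfolding UTT Rx_def id_pNt tx1 tx2 by simp
  qed

  have VP1: "\<And>y. y \<in> S \<Longrightarrow> ((\<lambda>z. P z t) has_vector_derivative sa * complex_of_real (Rx pF1 2 k a be nu y)) (at y)"
    unfolding PP by (rule vd_sa[OF RF0])
  have VD1: "\<And>y. y \<in> S \<Longrightarrow> vector_derivative (\<lambda>z. P z t) (at y) = sa * complex_of_real (Rx pF1 2 k a be nu y)"
    by (rule vector_derivative_at[OF VP1])
  have VP2: "((\<lambda>y. vector_derivative (\<lambda>z. P z t) (at y)) has_vector_derivative sa * complex_of_real (Rx pF2 3 k a be nu x)) (at x)"
    by (rule has_vector_derivative_transform_within_open[OF vd_sa[OF RF1[OF xS]] openS xS]) (simp add: VD1)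

  define s0 where "s0 = sin (k * x + be)"
  define c0 where "c0 = cos (k * x + be)"
  define g0 where "g0 = x + nu"
  define D0 where "D0 = Dd k g0 s0 c0"
  have D0nz: "D0 \<noteq> 0" using xS unfolding S_def D0_def s0_def c0_def g0_def by simp
  have pyth: "s0^2 + c0^2 = 1" unfolding s0_def c0_def by simp
  have RxE: "\<And>N n. Rx N n k a be nu x = N k a g0 s0 c0 / D0 ^ n"
    unfolding Rx_def D0_def s0_def c0_def g0_def ..

  show "U x t = 2 * deriv (\<lambda>y. deriv (\<lambda>z. ln \<bar>Den k x1 a b z t\<bar>) y) x
   \<and> (\<lambda>s. U x s) differentiable (at t)
   \<and> (\<lambda>y. U y t) differentiable (at x)
   \<and> (\<lambda>y. deriv (\<lambda>z. U z t) y) differentiable (at x)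
   \<and> (\<lambda>y. deriv (\<lambda>z. deriv (\<lambda>w. U w t) z) y) differentiable (at x)
   \<and> (\<lambda>y. P y t) differentiable (at x)
   \<and> (\<lambda>y. vector_derivative (\<lambda>z. P z t) (at y)) differentiable (at x)
   \<and> complex_of_real
        (deriv (\<lambda>s. U x s) t + 6 * U x t * deriv (\<lambda>y. U y t) x
         + deriv (\<lambda>y. deriv (\<lambda>z. deriv (\<lambda>w. U w t) z) y) x)
      + 4 * P x t * vector_derivative (\<lambda>y. P y t) (at x) = 0
   \<and> vector_derivative (\<lambda>y. vector_derivative (\<lambda>z. P z t) (at y)) (at x)
      + complex_of_real (k^2 + U x t) * P x t = 0"
  proof (intro conjI)
    have "2 * pL2 k a g0 s0 c0 = pN0 k a g0 s0 c0" using id_L[of k a g0 s0 c0] pyth by simp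
    then show "U x t = 2 * deriv (\<lambda>y. deriv (\<lambda>z. ln \<bar>Den k x1 a b z t\<bar>) y) x"
      unfolding LnX DERIV_imp_deriv[OF L2] UX RxE by simp
    show "(\<lambda>s. U x s) differentiable (at t)" by (rule rdiff[OF TD])
    show "(\<lambda>y. U y t) differentiable (at x)" unfolding UU by (rule rdiff[OF R0[OF xS]])
    show "(\<lambda>y. deriv (\<lambda>z. U z t) y) differentiable (at x)" unfolding UU
      by (rule rdiff[OF D2[OF xS]])
    show "(\<lambda>y. deriv (\<lambda>z. deriv (\<lambda>w. U w t) z) y) differentiable (at x)" unfolding UU
      by (rule rdiff[OF D3])
    show "(\<lambda>y. P y t) differentiable (at x)" by (rule differentiableI_vector[OF VP1[OF xS]])
    show "(\<lambda>y. vector_derivative (\<lambda>z. P z t) (at y)) differentiable (at x)"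
      by (rule differentiableI_vector[OF VP2])
    have E0: "pNt k a g0 s0 c0 * D0^2 + 6 * pN0 k a g0 s0 c0 * pN1 k a g0 s0 c0 + pN3 k a g0 s0 c0 + 4 * a * pF0 k a g0 s0 c0 * pF1 k a g0 s0 c0 * D0^2 = 0"
      using id_E[of k a g0 s0 c0] pyth unfolding D0_def by simp
    have Ereal: "pNt k a g0 s0 c0 / D0^3 + 6 * (pN0 k a g0 s0 c0 / D0^2) * (pN1 k a g0 s0 c0 / D0^3) + pN3 k a g0 s0 c0 / D0^5 + 4 * a * (pF0 k a g0 s0 c0 / D0^1) * (pF1 k a g0 s0 c0 / D0^2) = 0"
    proof -
      have "pNt k a g0 s0 c0 / D0^3 + 6 * (pN0 k a g0 s0 c0 / D0^2) * (pN1 k a g0 s0 c0 / D0^3) + pN3 k a g0 s0 c0 / D0^5 + 4 * a * (pF0 k a g0 s0 c0 / D0^1) * (pF1 k a g0 s0 c0 / D0^2)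
        = (pNt k a g0 s0 c0 * D0^2 + 6 * pN0 k a g0 s0 c0 * pN1 k a g0 s0 c0 + pN3 k a g0 s0 c0 + 4 * a * pF0 k a g0 s0 c0 * pF1 k a g0 s0 c0 * D0^2) / D0^5"
        using D0nz by (simp add: field_simps; algebra?)
      then show ?thesis using E0 by simp
    qed
    have sa2: "sa * sa = complex_of_real a" using assms(4) by (simp add: power2_eq_square)
    show "complex_of_real
        (deriv (\<lambda>s. U x s) t + 6 * U x t * deriv (\<lambda>y. U y t) x
         + deriv (\<lambda>y. deriv (\<lambda>z. deriv (\<lambda>w. U w t) z) y) x)
      + 4 * P x t * vector_derivative (\<lambda>y. P y t) (at x) = 0"
    proof -
      have "complex_of_real
        (deriv (\<lambda>s. U x s) t + 6 * U x t * deriv (\<lambda>y. U y t) x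
         + deriv (\<lambda>y. deriv (\<lambda>z. deriv (\<lambda>w. U w t) z) y) x)
      + 4 * P x t * vector_derivative (\<lambda>y. P y t) (at x)
        = complex_of_real (pNt k a g0 s0 c0 / D0^3 + 6 * (pN0 k a g0 s0 c0 / D0^2) * (pN1 k a g0 s0 c0 / D0^3) + pN3 k a g0 s0 c0 / D0^5)
          + 4 * (sa * complex_of_real (pF0 k a g0 s0 c0 / D0^1)) * (sa * complex_of_real (pF1 k a g0 s0 c0 / D0^2))"
        unfolding DERIV_imp_deriv[OF TD] UU U1 U3 VD1[OF xS] unfolding UX PX RxE by simp
      also have "\<dots> = complex_of_real (pNt k a g0 s0 c0 / D0^3 + 6 * (pN0 k a g0 s0 c0 / D0^2) * (pN1 k a g0 s0 c0 / D0^3) + pN3 k a g0 s0 c0 / D0^5 + 4 * a * (pF0 k a g0 s0 c0 / D0^1) * (pF1 k a g0 s0 c0 / D0^2))"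
        by (simp add: sa2[symmetric] algebra_simps)
      also have "\<dots> = 0" unfolding Ereal by simp
      finally show ?thesis .
    qed
    have S0: "pF2 k a g0 s0 c0 + k^2 * pF0 k a g0 s0 c0 * D0^2 + pN0 k a g0 s0 c0 * pF0 k a g0 s0 c0 = 0"
      using id_S[of k a g0 s0 c0] pyth unfolding D0_def by simp
    have Sreal: "pF2 k a g0 s0 c0 / D0^3 + (k^2 + pN0 k a g0 s0 c0 / D0^2) * (pF0 k a g0 s0 c0 / D0^1) = 0"
    proof -
      have "pF2 k a g0 s0 c0 / D0^3 + (k^2 + pN0 k a g0 s0 c0 / D0^2) * (pF0 k a g0 s0 c0 / D0^1)
          = (pF2 k a g0 s0 c0 + k^2 * pF0 k a g0 s0 c0 * D0^2 + pN0 k a g0 s0 c0 * pF0 k a g0 s0 c0) / D0^3"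
        using D0nz by (simp add: field_simps; algebra?)
      then show ?thesis using S0 by simp
    qed
    show "vector_derivative (\<lambda>y. vector_derivative (\<lambda>z. P z t) (at y)) (at x)
      + complex_of_real (k^2 + U x t) * P x t = 0"
    proof -
      have "vector_derivative (\<lambda>y. vector_derivative (\<lambda>z. P z t) (at y)) (at x)
      + complex_of_real (k^2 + U x t) * P x t
        = sa * complex_of_real (pF2 k a g0 s0 c0 / D0^3 + (k^2 + pN0 k a g0 s0 c0 / D0^2) * (pF0 k a g0 s0 c0 / D0^1))"
        unfolding vector_derivative_at[OF VP2] unfolding UX PX RxE by (simp add: algebra_simps)
      then show ?thesis unfolding Sreal by simp
    qed
  qed
qed

end
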